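(* Let $u,v:\mathbb{Z}\times[0,1]\to\mathbb{R}$ have at most polynomial growth in their first variable, let $u$ be upper-semicontinuous (in $t$) and a viscosity subsolution, and $v$ lower-semicontinuous and a viscosity supersolution, of $-w_t(y,t)-\beta(w(y+1,t)-2w(y,t)+w(y-1,t))=0$ on $\mathbb{Z}\times[0,1)$. If $u(\cdot,1)\le v(\cdot,1)$, then $u\le v$ on $\mathbb{Z}\times[0,1)$.
   Context: $\beta>0$. A function $w$ on $\mathbb{Z}\times[0,1]$ has at most polynomial growth if $|w(y,t)|\le C(1+|y|^k)$ for some $C,k$. For locally bounded $w$, $w^*(y,t)=\limsup_{t'\to t}w(y,t')$ and $w_*(y,t)=\liminf_{t'\to t}w(y,t')$. $w$ is a viscosity subsolution (resp. supersolution) of the equation if for every $(y,t)\in\mathbb{Z}\times[0,1)$ and every $\varphi:\mathbb{Z}\times[0,1]\to\mathbb{R}$ continuously differentiable in $t$ such that $(y,t)$ is a maximum point of $w^*-\varphi$ (resp. minimum point of $w_*-\varphi$), one has $-\varphi_t(y,t)-\beta(w^*(y+1,t)-2w^*(y,t)+w^*(y-1,t))\le0$ (resp. $-\varphi_t(y,t)-\beta(w_*(y+1,t)-2w_*(y,t)+w_*(y-1,t))\ge0$). *)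

theory Defs
  imports "HOL-Analysis.Analysis"
begin

text \<open>Functions on Z x [0,1] are modelled as w :: int => real => real; only
  values with t in [0,1] matter.\<close>

definition poly_growth :: "(int \<Rightarrow> real \<Rightarrow> real) \<Rightarrow> bool" where
  "poly_growth w \<longleftrightarrow> (\<exists>C (k::nat). \<forall>y. \<forall>t\<in>{0..1}. \<bar>w y t\<bar> \<le> C * (1 + \<bar>real_of_int y\<bar> ^ k))"

definition usc_in_t :: "(int \<Rightarrow> real \<Rightarrow> real) \<Rightarrow> bool" where
  "usc_in_t w \<longleftrightarrow> (\<forall>y. \<forall>t\<in>{0..1}. \<forall>e>0. \<exists>d>0. \<forall>t'\<in>{0..1}.
      \<bar>t' - t\<bar> < d \<longrightarrow> w y t' < w y t + e)"

definition lsc_in_t :: "(int \<Rightarrow> real \<Rightarrow> real) \<Rightarrow> bool" where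
  "lsc_in_t w \<longleftrightarrow> (\<forall>y. \<forall>t\<in>{0..1}. \<forall>e>0. \<exists>d>0. \<forall>t'\<in>{0..1}.
      \<bar>t' - t\<bar> < d \<longrightarrow> w y t - e < w y t')"

definition usc_env :: "(int \<Rightarrow> real \<Rightarrow> real) \<Rightarrow> int \<Rightarrow> real \<Rightarrow> real" where
  "usc_env w y t = (INF d\<in>{0<..}. SUP t'\<in>{t'\<in>{0..1}. \<bar>t' - t\<bar> < d}. w y t')"

definition lsc_env :: "(int \<Rightarrow> real \<Rightarrow> real) \<Rightarrow> int \<Rightarrow> real \<Rightarrow> real" where
  "lsc_env w y t = (SUP d\<in>{0<..}. INF t'\<in>{t'\<in>{0..1}. \<bar>t' - t\<bar> < d}. w y t')"

definition test_fun :: "(int \<Rightarrow> real \<Rightarrow> real) \<Rightarrow> (int \<Rightarrow> real \<Rightarrow> real) \<Rightarrow> bool" where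
  "test_fun \<phi> \<phi>' \<longleftrightarrow> (\<forall>y. (\<forall>s\<in>{0..1}. (\<phi> y has_real_derivative \<phi>' y s) (at s within {0..1}))
      \<and> continuous_on {0..1} (\<phi>' y))"

definition visc_sub :: "real \<Rightarrow> (int \<Rightarrow> real \<Rightarrow> real) \<Rightarrow> bool" where
  "visc_sub \<beta> w \<longleftrightarrow> (\<forall>y t \<phi> \<phi>'. t \<in> {0..<1} \<and> test_fun \<phi> \<phi>' \<and>
      (\<forall>z. \<forall>s\<in>{0..1}. usc_env w z s - \<phi> z s \<le> usc_env w y t - \<phi> y t) \<longrightarrow>
      - \<phi>' y t - \<beta> * (usc_env w (y+1) t - 2 * usc_env w y t + usc_env w (y-1) t) \<le> 0)"

definition visc_super :: "real \<Rightarrow> (int \<Rightarrow> real \<Rightarrow> real) \<Rightarrow> bool" where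
  "visc_super \<beta> w \<longleftrightarrow> (\<forall>y t \<phi> \<phi>'. t \<in> {0..<1} \<and> test_fun \<phi> \<phi>' \<and>
      (\<forall>z. \<forall>s\<in>{0..1}. lsc_env w z s - \<phi> z s \<ge> lsc_env w y t - \<phi> y t) \<longrightarrow>
      - \<phi>' y t - \<beta> * (lsc_env w (y+1) t - 2 * lsc_env w y t + lsc_env w (y-1) t) \<ge> 0)"

end

theory Submission
  imports Defs
begin

lemma usc_env_eq:
  assumes "usc_in_t w" "poly_growth w" "t \<in> {0..1}"
  shows "usc_env w y t = w y t"
proof -
  obtain C and k::nat where C: "\<forall>y. \<forall>t\<in>{0..1}. \<bar>w y t\<bar> \<le> C * (1 + \<bar>real_of_int y\<bar> ^ k)"
    using assms(2) unfolding poly_growth_def by blast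
  have ne: "t \<in> {t'\<in>{0..1}. \<bar>t' - t\<bar> < d}" if "d > 0" for d using that assms(3) by simp
  have bdd: "bdd_above (w y ` {t'\<in>{0..1}. \<bar>t' - t\<bar> < d})" for d
  proof (rule bdd_aboveI2)
    fix x assume "x \<in> {t'\<in>{0..1}. \<bar>t' - t\<bar> < d}"
    then have "x \<in> {0..1}" by simp
    then have "\<bar>w y x\<bar> \<le> C * (1 + \<bar>real_of_int y\<bar> ^ k)" using C by blast
    then show "w y x \<le> C * (1 + \<bar>real_of_int y\<bar> ^ k)" by (simp add: abs_le_iff)
  qed
  have ge: "w y t \<le> (SUP t'\<in>{t'\<in>{0..1}. \<bar>t' - t\<bar> < d}. w y t')" if "d > 0" for d
    by (rule cSUP_upper[OF ne[OF that] bdd])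
  show ?thesis unfolding usc_env_def
  proof (rule antisym)
    show "w y t \<le> (INF d\<in>{0<..}. SUP t'\<in>{t'\<in>{0..1}. \<bar>t' - t\<bar> < d}. w y t')"
      by (rule cINF_greatest, simp, rule ge, simp)
    show "(INF d\<in>{0<..}. SUP t'\<in>{t'\<in>{0..1}. \<bar>t' - t\<bar> < d}. w y t') \<le> w y t"
    proof (rule field_le_epsilon)
      fix e :: real assume e: "0 < e"
      obtain d where d: "d > 0" "\<forall>t'\<in>{0..1}. \<bar>t' - t\<bar> < d \<longrightarrow> w y t' < w y t + e"
        using assms(1) assms(3) e unfolding usc_in_t_def by blast
      have "(INF d\<in>{0<..}. SUP t'\<in>{t'\<in>{0..1}. \<bar>t' - t\<bar> < d}. w y t') \<le>
            (SUP t'\<in>{t'\<in>{0..1}. \<bar>t' - t\<bar> < d}. w y t')"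
        by (rule cINF_lower, rule bdd_belowI2[where m="w y t"], rule ge, simp, simp add: d)
      also have "\<dots> \<le> w y t + e"
        by (rule cSUP_least) (use ne[OF d(1)] d(2) in \<open>auto intro: less_imp_le\<close>)
      finally show "(INF d\<in>{0<..}. SUP t'\<in>{t'\<in>{0..1}. \<bar>t' - t\<bar> < d}. w y t') \<le> w y t + e" .
    qed
  qed
qed

lemma lsc_env_eq:
  assumes "lsc_in_t w" "poly_growth w" "t \<in> {0..1}"
  shows "lsc_env w y t = w y t"
proof -
  obtain C and k::nat where C: "\<forall>y. \<forall>t\<in>{0..1}. \<bar>w y t\<bar> \<le> C * (1 + \<bar>real_of_int y\<bar> ^ k)"
    using assms(2) unfolding poly_growth_def by blast
  have ne: "t \<in> {t'\<in>{0..1}. \<bar>t' - t\<bar> < d}" if "d > 0" for d using that assms(3) by simp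
  have bdd: "bdd_below (w y ` {t'\<in>{0..1}. \<bar>t' - t\<bar> < d})" for d
  proof (rule bdd_belowI2)
    fix x assume "x \<in> {t'\<in>{0..1}. \<bar>t' - t\<bar> < d}"
    then have "x \<in> {0..1}" by simp
    then have "\<bar>w y x\<bar> \<le> C * (1 + \<bar>real_of_int y\<bar> ^ k)" using C by blast
    then show "- (C * (1 + \<bar>real_of_int y\<bar> ^ k)) \<le> w y x" by (simp add: abs_le_iff)
  qed
  have le: "(INF t'\<in>{t'\<in>{0..1}. \<bar>t' - t\<bar> < d}. w y t') \<le> w y t" if "d > 0" for d
    by (rule cINF_lower[OF bdd ne[OF that]])
  show ?thesis unfolding lsc_env_def
  proof (rule antisym)
    show "w y t \<le> (SUP d\<in>{0<..}. INF t'\<in>{t'\<in>{0..1}. \<bar>t' - t\<bar> < d}. w y t')"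
    proof (rule field_le_epsilon)
      fix e :: real assume e: "0 < e"
      obtain d where d: "d > 0" "\<forall>t'\<in>{0..1}. \<bar>t' - t\<bar> < d \<longrightarrow> w y t - e < w y t'"
        using assms(1) assms(3) e unfolding lsc_in_t_def by blast
      have "w y t - e \<le> (INF t'\<in>{t'\<in>{0..1}. \<bar>t' - t\<bar> < d}. w y t')"
        by (rule cINF_greatest) (use ne[OF d(1)] d(2) in \<open>auto intro: less_imp_le\<close>)
      also have "\<dots> \<le> (SUP d\<in>{0<..}. INF t'\<in>{t'\<in>{0..1}. \<bar>t' - t\<bar> < d}. w y t')"
        by (rule cSUP_upper, simp add: d, rule bdd_aboveI2[where M="w y t"], rule le, simp)
      finally show "w y t \<le> (SUP d\<in>{0<..}. INF t'\<in>{t'\<in>{0..1}. \<bar>t' - t\<bar> < d}. w y t') + e"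
        by simp
    qed
    show "(SUP d\<in>{0<..}. INF t'\<in>{t'\<in>{0..1}. \<bar>t' - t\<bar> < d}. w y t') \<le> w y t"
      by (rule cSUP_least, simp, rule le, simp)
  qed
qed

lemma usc_max:
  fixes f :: "'a::topological_space \<Rightarrow> real"
  assumes "compact S" "S \<noteq> {}"
    and usc: "\<And>x c. x \<in> S \<Longrightarrow> f x < c \<Longrightarrow> \<exists>U. open U \<and> x \<in> U \<and> (\<forall>x'\<in>S\<inter>U. f x' < c)"
  shows "\<exists>x\<in>S. \<forall>x'\<in>S. f x' \<le> f x"
proof (rule ccontr)
  assume "\<not> ?thesis"
  then have "\<forall>x\<in>S. \<exists>x'\<in>S. f x < f x'" by (auto simp: not_le)
  then have "\<forall>x\<in>S. \<exists>g U. g \<in> S \<and> f x < f g \<and> open U \<and> x \<in> U \<and> (\<forall>x'\<in>S\<inter>U. f x' < f g)"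
    using usc by metis
  then obtain g U where gU: "\<And>x. x \<in> S \<Longrightarrow> g x \<in> S \<and> f x < f (g x) \<and> open (U x) \<and> x \<in> U x
      \<and> (\<forall>x'\<in>S\<inter>U x. f x' < f (g x))"
    by metis
  obtain T where T: "T \<subseteq> S" "finite T" "S \<subseteq> (\<Union>c\<in>T. U c)"
    by (rule compactE_image[OF assms(1), of S U]) (use gU in auto)
  have "T \<noteq> {}" using T(3) assms(2) by auto
  define m where "m = Max ((\<lambda>x. f (g x)) ` T)"
  have "m \<in> (\<lambda>x. f (g x)) ` T" unfolding m_def using T(2) \<open>T \<noteq> {}\<close> by (intro Max_in) auto
  then obtain x0 where x0: "x0 \<in> T" "m = f (g x0)" by auto
  have "g x0 \<in> S" using gU x0 T(1) by auto
  then obtain x1 where x1: "x1 \<in> T" "g x0 \<in> U x1" using T(3) by auto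
  have "f (g x0) < f (g x1)" using gU[of x1] x1 T(1) \<open>g x0 \<in> S\<close> by auto
  moreover have "f (g x1) \<le> m" unfolding m_def using T(2) x1(1) by (intro Max_ge) auto
  ultimately show False using x0 by simp
qed

lemma poly_lt_exp:
  fixes A D :: real and k :: nat
  assumes "D > 0"
  shows "\<exists>R\<ge>0. \<forall>x. x > R \<longrightarrow> A * (1 + x) ^ k < D * exp x"
proof -
  define n where "n = Suc k"
  define R where "R = \<bar>A\<bar> * real n ^ n / D"
  have R0: "R \<ge> 0" unfolding R_def using assms by simp
  have "A * (1 + x) ^ k < D * exp x" if x: "x > R" for x
  proof -
    have x0: "x > 0" using x R0 by simp
    have "(1 + x / real n) ^ n \<le> exp x"
      by (rule exp_ge_one_plus_x_over_n_power_n) (use x0 n_def in auto)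
    moreover have "(1 + x) / real n \<le> 1 + x / real n" using x0 n_def
      by (simp add: divide_simps)
    ultimately have "((1 + x) / real n) ^ n \<le> exp x"
      using x0 by (meson order_trans power_mono divide_nonneg_nonneg less_imp_le add_nonneg_nonneg zero_le_one of_nat_0_le_iff)
    then have e: "(1 + x) ^ n \<le> real n ^ n * exp x"
      using n_def by (simp add: power_divide divide_simps ac_simps)
    have "A * (1 + x) ^ k \<le> \<bar>A\<bar> * (1 + x) ^ k" using x0 by (intro mult_right_mono) auto
    also have "(1 + x) ^ k * (1 + x) \<le> real n ^ n * exp x" using e n_def by (simp add: ac_simps)
    then have "\<bar>A\<bar> * (1 + x) ^ k * (1 + x) \<le> \<bar>A\<bar> * (real n ^ n * exp x)"
      by (simp add: mult.assoc mult_left_mono)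
    then have "\<bar>A\<bar> * (1 + x) ^ k \<le> \<bar>A\<bar> * real n ^ n * exp x / (1 + x)"
      using x0 by (simp add: divide_simps mult.assoc)
    also have "\<dots> < D * exp x"
    proof -
      have "\<bar>A\<bar> * real n ^ n < D * (1 + x)" using x assms unfolding R_def
        by (simp add: divide_simps algebra_simps)
      then have "\<bar>A\<bar> * real n ^ n * exp x < D * (1 + x) * exp x" by simp
      then show ?thesis using x0 by (simp add: divide_simps algebra_simps)
    qed
    finally show ?thesis .
  qed
  then show ?thesis using R0 by blast
qed


theorem lemmaA3:
  fixes \<beta> :: real and u v :: "int \<Rightarrow> real \<Rightarrow> real"
  assumes "\<beta> > 0"
    and "poly_growth u" and "poly_growth v"
    and "usc_in_t u" and "lsc_in_t v"
    and "visc_sub \<beta> u" and "visc_super \<beta> v"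
    and "\<forall>y. u y 1 \<le> v y 1"
  shows "\<forall>y. \<forall>t\<in>{0..<1}. u y t \<le> v y t"
proof (rule ccontr)
  assume "\<not> ?thesis"
  then obtain y0 t0 where y0t0: "t0 \<in> {0..<1}" "u y0 t0 > v y0 t0" by (auto simp: not_le)
  define \<eta> where "\<eta> = u y0 t0 - v y0 t0"
  have eta: "\<eta> > 0" using y0t0 by (simp add: \<eta>_def)
  define \<psi> :: "int \<Rightarrow> real" where "\<psi> z = exp (real_of_int z) + exp (- real_of_int z)" for z
  define c :: real where "c = exp 1 + exp (-1) - 2"
  have c: "c > 0"
  proof -
    have e1: "exp (1::real) * exp (-1) = 1" by (simp add: exp_minus)
    have "exp (1::real) > 1" by simp
    then have "exp (1::real) * c = (exp 1 - 1)^2" unfolding c_def using e1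
      by (simp add: algebra_simps power2_eq_square)
    moreover have "(exp (1::real) - 1)^2 > 0" using \<open>exp (1::real) > 1\<close> by simp
    ultimately show ?thesis using \<open>exp (1::real) > 1\<close> by (metis zero_less_mult_pos exp_gt_zero)
  qed
  have psi_pos: "\<psi> z > 0" for z unfolding \<psi>_def by (simp add: add_pos_pos)
  have psi_ge: "exp \<bar>real_of_int z\<bar> \<le> \<psi> z" for z
    unfolding \<psi>_def by (cases "z \<ge> 0") auto
  have psi_lap: "\<psi> (z+1) + \<psi> (z-1) - 2 * \<psi> z = c * \<psi> z" for z
  proof -
    have "\<psi> (z+1) = exp (real_of_int z) * exp 1 + exp (- real_of_int z) * exp (-1)"
      unfolding \<psi>_def by (simp add: mult_exp_exp algebra_simps)
    moreover have "\<psi> (z-1) = exp (real_of_int z) * exp (-1) + exp (- real_of_int z) * exp 1"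
      unfolding \<psi>_def by (simp add: mult_exp_exp algebra_simps)
    ultimately show ?thesis unfolding c_def \<psi>_def by (simp add: algebra_simps)
  qed
  define K where "K = 2 * \<beta> * c"
  have K0: "K \<ge> 0" unfolding K_def using c assms(1) by simp
  define \<delta> where "\<delta> = \<eta> / (4 * \<psi> y0)"
  have dpos: "\<delta> > 0" unfolding \<delta>_def using eta psi_pos[of y0] by simp
  have dpsi: "\<delta> * \<psi> y0 = \<eta> / 4" unfolding \<delta>_def using psi_pos[of y0] by simp
  obtain Cu and ku::nat where Cu: "\<forall>y. \<forall>t\<in>{0..1}. \<bar>u y t\<bar> \<le> Cu * (1 + \<bar>real_of_int y\<bar> ^ ku)"
    using assms(2) unfolding poly_growth_def by blast
  obtain Cv and kv::nat where Cv: "\<forall>y. \<forall>t\<in>{0..1}. \<bar>v y t\<bar> \<le> Cv * (1 + \<bar>real_of_int y\<bar> ^ kv)"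
    using assms(3) unfolding poly_growth_def by blast
  define k where "k = max ku kv"
  define A where "A = 2 * (\<bar>Cu\<bar> + \<bar>Cv\<bar>)"
  have A0: "A \<ge> 0" unfolding A_def by simp
  obtain R where R: "R \<ge> 0" "\<forall>x. x > R \<longrightarrow> A * (1+x)^k < \<delta> * exp (-K) * exp x"
    using poly_lt_exp[of "\<delta> * exp (-K)" A k] dpos by auto
  have bound: "\<bar>u y t\<bar> + \<bar>v y s\<bar> \<le> A * (1 + \<bar>real_of_int y\<bar>)^k"
    if "t \<in> {0..1}" "s \<in> {0..1}" for y t s
  proof -
    have p: "1 + \<bar>real_of_int y\<bar> ^ j \<le> 2 * (1 + \<bar>real_of_int y\<bar>)^k" if "j \<le> k" for j
    proof -
      have "\<bar>real_of_int y\<bar> ^ j \<le> (1 + \<bar>real_of_int y\<bar>) ^ j" by (intro power_mono) auto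
      also have "\<dots> \<le> (1 + \<bar>real_of_int y\<bar>) ^ k" by (intro power_increasing that) auto
      finally have "\<bar>real_of_int y\<bar> ^ j \<le> (1 + \<bar>real_of_int y\<bar>) ^ k" .
      moreover have "1 \<le> (1 + \<bar>real_of_int y\<bar>) ^ k" by (intro one_le_power) auto
      ultimately show ?thesis by linarith
    qed
    have "\<bar>u y t\<bar> \<le> \<bar>Cu\<bar> * (1 + \<bar>real_of_int y\<bar> ^ ku)"
      using Cu that(1) by (meson abs_ge_self mult_right_mono order_trans add_nonneg_nonneg zero_le_one zero_le_power abs_ge_zero)
    also have "\<dots> \<le> \<bar>Cu\<bar> * (2 * (1 + \<bar>real_of_int y\<bar>)^k)"
      by (intro mult_left_mono p) (auto simp: k_def)
    finally have 1: "\<bar>u y t\<bar> \<le> \<bar>Cu\<bar> * (2 * (1 + \<bar>real_of_int y\<bar>)^k)" .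
    have "\<bar>v y s\<bar> \<le> \<bar>Cv\<bar> * (1 + \<bar>real_of_int y\<bar> ^ kv)"
      using Cv that(2) by (meson abs_ge_self mult_right_mono order_trans add_nonneg_nonneg zero_le_one zero_le_power abs_ge_zero)
    also have "\<dots> \<le> \<bar>Cv\<bar> * (2 * (1 + \<bar>real_of_int y\<bar>)^k)"
      by (intro mult_left_mono p) (auto simp: k_def)
    finally have 2: "\<bar>v y s\<bar> \<le> \<bar>Cv\<bar> * (2 * (1 + \<bar>real_of_int y\<bar>)^k)" .
    show ?thesis using 1 2 unfolding A_def by (simp add: algebra_simps)
  qed
  define N where "N = nat \<lceil>R\<rceil>"
  define Y where "Y = {- int N..int N}"
  have finY: "finite Y" and Yne: "Y \<noteq> {}" unfolding Y_def by auto
  have outY: "\<bar>real_of_int y\<bar> > R" if "y \<notin> Y" for y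
  proof -
    have "\<bar>y\<bar> > int N" using that unfolding Y_def by auto
    then have "\<bar>real_of_int y\<bar> > real N" by linarith
    moreover have "real N \<ge> R" unfolding N_def by linarith
    ultimately show ?thesis by linarith
  qed
  have inY: "\<bar>real_of_int y\<bar> \<le> real N" if "y \<in> Y" for y
    using that unfolding Y_def by auto
  have "\<forall>y. \<exists>d>0. \<forall>t'\<in>{0..1}. \<bar>t' - 1\<bar> < d \<longrightarrow> u y t' < u y 1 + \<eta>/4 \<and> v y 1 - \<eta>/4 < v y t'"
  proof
    fix y
    have e4: "\<eta>/4 > 0" using eta by simp
    have one: "(1::real) \<in> {0..1}" by simp
    have U: "\<forall>e>0. \<exists>d>0. \<forall>t'\<in>{0..1}. \<bar>t' - 1\<bar> < d \<longrightarrow> u y t' < u y 1 + e"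
      using assms(4) one unfolding usc_in_t_def by blast
    have V: "\<forall>e>0. \<exists>d>0. \<forall>t'\<in>{0..1}. \<bar>t' - 1\<bar> < d \<longrightarrow> v y 1 - e < v y t'"
      using assms(5) one unfolding lsc_in_t_def by blast
    obtain d1 where d1: "d1 > 0" "\<forall>t'\<in>{0..1}. \<bar>t' - 1\<bar> < d1 \<longrightarrow> u y t' < u y 1 + \<eta>/4"
      using U e4 by blast
    obtain d2 where d2: "d2 > 0" "\<forall>t'\<in>{0..1}. \<bar>t' - 1\<bar> < d2 \<longrightarrow> v y 1 - \<eta>/4 < v y t'"
      using V e4 by blast
    show "\<exists>d>0. \<forall>t'\<in>{0..1}. \<bar>t' - 1\<bar> < d \<longrightarrow> u y t' < u y 1 + \<eta>/4 \<and> v y 1 - \<eta>/4 < v y t'"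
      by (rule exI[of _ "min d1 d2"]) (use d1 d2 in auto)
  qed
  then obtain dfun where dfun: "\<And>y. dfun y > 0"
    "\<And>y t'. t' \<in> {0..1} \<Longrightarrow> \<bar>t' - 1\<bar> < dfun y \<Longrightarrow> u y t' < u y 1 + \<eta>/4 \<and> v y 1 - \<eta>/4 < v y t'"
    by metis
  define d where "d = Min (dfun ` Y)"
  have d0: "d > 0" unfolding d_def using finY Yne dfun(1) by (subst Min_gr_iff) auto
  have dle: "d \<le> dfun y" if "y \<in> Y" for y unfolding d_def using finY that by simp
  define M where "M = A * (1 + real N)^k"
  have M0: "M \<ge> 0" unfolding M_def using A0 by simp
  have boundY: "\<bar>u y t\<bar> + \<bar>v y s\<bar> \<le> M" if "y \<in> Y" "t \<in> {0..1}" "s \<in> {0..1}" for y t s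
  proof -
    have "A * (1 + \<bar>real_of_int y\<bar>)^k \<le> M" unfolding M_def
      using inY[OF that(1)] A0 by (intro mult_left_mono power_mono) auto
    then show ?thesis using bound[OF that(2,3), of y] by linarith
  qed
  define \<epsilon> where "\<epsilon> = d^2 / (2 * (2 * M + 1))"
  have eps0: "\<epsilon> > 0" unfolding \<epsilon>_def using d0 M0 by simp
  have eps_d: "2 * \<epsilon> * M < d^2"
  proof -
    have "2 * \<epsilon> * M = d^2 * (M / (2 * M + 1))" unfolding \<epsilon>_def using M0 by (simp add: field_simps)
    also have "\<dots> < d^2 * 1" using M0 d0 by (intro mult_strict_left_mono) auto
    finally show ?thesis by simp
  qed
  define \<Phi> where "\<Phi> y t s = u y t - v y s - (t - s)^2 / (2 * \<epsilon>) - \<delta> * exp (- K * t) * \<psi> y" for y t s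
  have pen0: "\<delta> * exp (- K * t) * \<psi> y \<ge> 0" for t y using dpos psi_pos[of y] by simp
  have Phi0: "\<Phi> y0 t0 t0 \<ge> 3 * \<eta> / 4"
  proof -
    have "exp (- K * t0) \<le> 1" using K0 y0t0(1) by simp
    then have "\<delta> * exp (- K * t0) * \<psi> y0 \<le> \<delta> * 1 * \<psi> y0"
      using dpos psi_pos[of y0] by (intro mult_right_mono mult_left_mono) auto
    then show ?thesis unfolding \<Phi>_def \<eta>_def using dpsi \<eta>_def by simp
  qed
  have Phi_out: "\<Phi> y t s < 0" if "y \<notin> Y" "t \<in> {0..1}" "s \<in> {0..1}" for y t s
  proof -
    have "exp (- K) \<le> exp (- K * t)" using K0 that(2) by (simp add: mult_left_le)
    then have "\<delta> * exp (- K) * exp \<bar>real_of_int y\<bar> \<le> \<delta> * exp (- K * t) * \<psi> y"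
      using dpos psi_ge[of y] by (intro mult_mono) auto
    moreover have "A * (1 + \<bar>real_of_int y\<bar>)^k < \<delta> * exp (-K) * exp \<bar>real_of_int y\<bar>"
      using R(2) outY[OF that(1)] by blast
    moreover have "(t - s)^2 / (2 * \<epsilon>) \<ge> 0" using eps0 by simp
    ultimately show ?thesis unfolding \<Phi>_def using bound[OF that(2,3), of y] by linarith
  qed
  define S where "S = Y \<times> ({0..1::real} \<times> {0..1::real})"
  have "\<exists>p\<in>S. \<forall>p'\<in>S. (\<lambda>(y,t,s). \<Phi> y t s) p' \<le> (\<lambda>(y,t,s). \<Phi> y t s) p"
  proof (rule usc_max)
    show "compact S" unfolding S_def using finY
      by (intro compact_Times finite_imp_compact compact_Icc) auto
    show "S \<noteq> {}" unfolding S_def using Yne by auto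
  next
    fix p and cc :: real
    assume p: "p \<in> S" and pc: "(\<lambda>(y,t,s). \<Phi> y t s) p < cc"
    obtain y t s where pe: "p = (y,t,s)" by (cases p) auto
    have ts: "t \<in> {0..1}" "s \<in> {0..1}" using p pe S_def by auto
    define g where "g = cc - \<Phi> y t s"
    have g0: "g/3 > 0" using pc pe g_def by simp
    obtain d1 where d1: "d1 > 0" "\<forall>t'\<in>{0..1}. \<bar>t' - t\<bar> < d1 \<longrightarrow> u y t' < u y t + g/3"
      using assms(4) ts(1) g0 unfolding usc_in_t_def by blast
    obtain d2 where d2: "d2 > 0" "\<forall>t'\<in>{0..1}. \<bar>t' - s\<bar> < d2 \<longrightarrow> v y s - g/3 < v y t'"
      using assms(5) ts(2) g0 unfolding lsc_in_t_def by blast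
    define h :: "int \<times> real \<times> real \<Rightarrow> real" where
      "h q = (fst (snd q) - snd (snd q))^2 / (2 * \<epsilon>) + \<delta> * exp (- K * fst (snd q)) * \<psi> y" for q
    define U where "U = ({y} \<times> (ball t d1 \<times> ball s d2)) \<inter> {q. h p - g/3 < h q}"
    have "continuous_on UNIV h" unfolding h_def by (intro continuous_intros) (use eps0 in auto)
    then have "open {q. h p - g/3 < h q}" by (intro open_Collect_less continuous_intros)
    then have "open U" unfolding U_def by (intro open_Int open_Times open_discrete open_ball) auto
    moreover have "p \<in> U" unfolding U_def pe using d1(1) d2(1) g0 by auto
    moreover have "\<forall>q\<in>S \<inter> U. (\<lambda>(y,t,s). \<Phi> y t s) q < cc"
    proof
      fix q assume q: "q \<in> S \<inter> U"
      then obtain t' s' where qe: "q = (y,t',s')" "t' \<in> {0..1}" "s' \<in> {0..1}"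
        "\<bar>t' - t\<bar> < d1" "\<bar>s' - s\<bar> < d2" "h p - g/3 < h q"
        unfolding U_def S_def by (auto simp: dist_real_def abs_minus_commute)
      have "u y t' < u y t + g/3" using d1(2) qe by blast
      moreover have "v y s - g/3 < v y s'" using d2(2) qe by blast
      moreover have "\<Phi> y t' s' = u y t' - v y s' - h q" "\<Phi> y t s = u y t - v y s - h p"
        unfolding \<Phi>_def h_def qe pe by simp_all
      ultimately show "(\<lambda>(y,t,s). \<Phi> y t s) q < cc" using qe(1,6) g_def by (simp; linarith)
    qed
    ultimately show "\<exists>U. open U \<and> p \<in> U \<and> (\<forall>q\<in>S \<inter> U. (\<lambda>(y,t,s). \<Phi> y t s) q < cc)" by blast
  qed
  then obtain yb tb sb where bS: "(yb,tb,sb) \<in> S" and bmax: "\<And>y t s. (y,t,s) \<in> S \<Longrightarrow> \<Phi> y t s \<le> \<Phi> yb tb sb"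
    by fastforce
  have bY: "yb \<in> Y" and tb01: "tb \<in> {0..1}" and sb01: "sb \<in> {0..1}" using bS S_def by auto
  have y0Y: "y0 \<in> Y" using Phi_out[of y0 t0 t0] Phi0 eta y0t0(1) by force
  have Phib: "\<Phi> yb tb sb \<ge> 3 * \<eta> / 4" using bmax[of y0 t0 t0] y0Y y0t0(1) Phi0 S_def by auto
  have gmax: "\<Phi> y t s \<le> \<Phi> yb tb sb" if "t \<in> {0..1}" "s \<in> {0..1}" for y t s
  proof (cases "y \<in> Y")
    case True then show ?thesis using bmax that S_def by auto
  next
    case False then show ?thesis using Phi_out[OF False that] Phib eta by linarith
  qed
  have close: "\<bar>tb - sb\<bar> < d"
  proof -
    have "\<Phi> yb tb sb \<le> M - (tb - sb)^2 / (2 * \<epsilon>)"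
      using boundY[OF bY tb01 sb01] pen0[of tb yb] unfolding \<Phi>_def by linarith
    then have "(tb - sb)^2 / (2 * \<epsilon>) \<le> M" using Phib eta by linarith
    then have "(tb - sb)^2 \<le> 2 * \<epsilon> * M" using eps0 by (simp add: divide_simps mult.commute)
    then have "\<bar>tb - sb\<bar>^2 < d^2" using eps_d by simp
    then show ?thesis by (rule power_less_imp_less_base) (use d0 in simp)
  qed
  have sq0: "(x::real)^2 / (2 * \<epsilon>) \<ge> 0" for x using eps0 by simp
  have tb1: "tb < 1"
  proof (rule ccontr)
    assume "\<not> tb < 1"
    then have tb: "tb = 1" using tb01 by simp
    have "\<bar>sb - 1\<bar> < dfun yb" using close dle[OF bY] tb by (simp add: abs_minus_commute)
    then have "v yb 1 - \<eta>/4 < v yb sb" using dfun(2)[OF sb01] by blast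
    moreover have "\<Phi> yb tb sb \<le> u yb 1 - v yb sb"
      using pen0[of tb yb] sq0[of "tb - sb"] unfolding \<Phi>_def tb by simp
    ultimately show False using spec[OF assms(8), of yb] Phib eta by linarith
  qed
  have sb1: "sb < 1"
  proof (rule ccontr)
    assume "\<not> sb < 1"
    then have sb: "sb = 1" using sb01 by simp
    have "\<bar>tb - 1\<bar> < dfun yb" using close dle[OF bY] sb by simp
    then have "u yb tb < u yb 1 + \<eta>/4" using dfun(2)[OF tb01] by blast
    moreover have "\<Phi> yb tb sb \<le> u yb tb - v yb 1"
      using pen0[of tb yb] sq0[of "tb - sb"] unfolding \<Phi>_def sb by simp
    ultimately show False using spec[OF assms(8), of yb] Phib eta by linarith
  qed
  define \<phi>1 where "\<phi>1 z t = v z sb + (t - sb)^2 / (2 * \<epsilon>) + \<delta> * exp (- K * t) * \<psi> z" for z t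
  define \<phi>1' where "\<phi>1' z t = (t - sb) / \<epsilon> - \<delta> * K * exp (- K * t) * \<psi> z" for z t
  define \<phi>2 where "\<phi>2 z s = u z tb - (tb - s)^2 / (2 * \<epsilon>) - \<delta> * exp (- K * tb) * \<psi> z" for z s
  define \<phi>2' :: "int \<Rightarrow> real \<Rightarrow> real" where "\<phi>2' z s = (tb - s) / \<epsilon>" for z s
  have tf1: "test_fun \<phi>1 \<phi>1'"
    unfolding test_fun_def
  proof (intro allI conjI ballI)
    fix z s
    show "(\<phi>1 z has_real_derivative \<phi>1' z s) (at s within {0..1})"
      unfolding \<phi>1_def \<phi>1'_def using eps0
      by (auto intro!: derivative_eq_intros simp: field_simps power2_eq_square)
    show "continuous_on {0..1} (\<phi>1' z)" unfolding \<phi>1'_def by (intro continuous_intros) (use eps0 in auto)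
  qed
  have tf2: "test_fun \<phi>2 \<phi>2'"
    unfolding test_fun_def
  proof (intro allI conjI ballI)
    fix z s
    show "(\<phi>2 z has_real_derivative \<phi>2' z s) (at s within {0..1})"
      unfolding \<phi>2_def \<phi>2'_def using eps0
      by (auto intro!: derivative_eq_intros simp: field_simps power2_eq_square)
    show "continuous_on {0..1} (\<phi>2' z)" unfolding \<phi>2'_def by (intro continuous_intros) (use eps0 in auto)
  qed
  have c1: "\<forall>z. \<forall>s\<in>{0..1}. usc_env u z s - \<phi>1 z s \<le> usc_env u yb tb - \<phi>1 yb tb"
  proof (intro allI ballI)
    fix z s assume s: "s \<in> {0..(1::real)}"
    have "usc_env u z s - \<phi>1 z s = \<Phi> z s sb"
      using usc_env_eq[OF assms(4,2) s] unfolding \<phi>1_def \<Phi>_def by simp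
    moreover have "usc_env u yb tb - \<phi>1 yb tb = \<Phi> yb tb sb"
      using usc_env_eq[OF assms(4,2) tb01] unfolding \<phi>1_def \<Phi>_def by simp
    ultimately show "usc_env u z s - \<phi>1 z s \<le> usc_env u yb tb - \<phi>1 yb tb"
      using gmax[OF s sb01] by simp
  qed
  have c2: "\<forall>z. \<forall>s\<in>{0..1}. lsc_env v z s - \<phi>2 z s \<ge> lsc_env v yb sb - \<phi>2 yb sb"
  proof (intro allI ballI)
    fix z s assume s: "s \<in> {0..(1::real)}"
    have "lsc_env v z s - \<phi>2 z s = - \<Phi> z tb s"
      using lsc_env_eq[OF assms(5,3) s] unfolding \<phi>2_def \<Phi>_def by simp
    moreover have "lsc_env v yb sb - \<phi>2 yb sb = - \<Phi> yb tb sb"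
      using lsc_env_eq[OF assms(5,3) sb01] unfolding \<phi>2_def \<Phi>_def by simp
    ultimately show "lsc_env v z s - \<phi>2 z s \<ge> lsc_env v yb sb - \<phi>2 yb sb"
      using gmax[OF tb01 s] by simp
  qed
  have S1: "- \<phi>1' yb tb - \<beta> * (usc_env u (yb+1) tb - 2 * usc_env u yb tb + usc_env u (yb-1) tb) \<le> 0"
    using assms(6) tf1 c1 tb01 tb1 unfolding visc_sub_def by auto
  have S2: "- \<phi>2' yb sb - \<beta> * (lsc_env v (yb+1) sb - 2 * lsc_env v yb sb + lsc_env v (yb-1) sb) \<ge> 0"
    using assms(7) tf2 c2 sb01 sb1 unfolding visc_super_def by auto
  define a where "a = exp (- K * tb)"
  define Lu where "Lu = u (yb+1) tb - 2 * u yb tb + u (yb-1) tb"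
  define Lv where "Lv = v (yb+1) sb - 2 * v yb sb + v (yb-1) sb"
  have S1': "- ((tb - sb) / \<epsilon>) + K * (\<delta> * a * \<psi> yb) - \<beta> * Lu \<le> 0"
    using S1 usc_env_eq[OF assms(4,2) tb01] unfolding \<phi>1'_def Lu_def a_def by (simp add: algebra_simps)
  have S2': "- ((tb - sb) / \<epsilon>) - \<beta> * Lv \<ge> 0"
    using S2 lsc_env_eq[OF assms(5,3) sb01] unfolding \<phi>2'_def Lv_def by simp
  have M1: "\<Phi> (yb+1) tb sb \<le> \<Phi> yb tb sb" and M2: "\<Phi> (yb-1) tb sb \<le> \<Phi> yb tb sb"
    using gmax[OF tb01 sb01] by auto
  have "Lu - Lv \<le> \<delta> * a * \<psi> (yb+1) + \<delta> * a * \<psi> (yb-1) - 2 * (\<delta> * a * \<psi> yb)"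
    using M1 M2 unfolding \<Phi>_def Lu_def Lv_def a_def by linarith
  also have "\<dots> = \<delta> * a * (\<psi> (yb+1) + \<psi> (yb-1) - 2 * \<psi> yb)" by (simp add: algebra_simps)
  also have "\<dots> = c * (\<delta> * a * \<psi> yb)" using psi_lap[of yb] by simp
  finally have LL: "Lu - Lv \<le> c * (\<delta> * a * \<psi> yb)" .
  have "\<beta> * (Lu - Lv) \<le> \<beta> * (c * (\<delta> * a * \<psi> yb))" using LL assms(1) by (intro mult_left_mono) auto
  moreover have "K * (\<delta> * a * \<psi> yb) = 2 * (\<beta> * (c * (\<delta> * a * \<psi> yb)))" unfolding K_def by simp
  moreover have "\<beta> * (c * (\<delta> * a * \<psi> yb)) > 0" using assms(1) c dpos psi_pos[of yb] unfolding a_def by simp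
  moreover have "\<beta> * (Lu - Lv) = \<beta> * Lu - \<beta> * Lv" by (simp add: algebra_simps)
  ultimately show False using S1' S2' by linarith
qed
end
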